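(* Let $f:\mathbb{R}^2\to\mathbb{R}^2$ be a Topologically Anosov homeomorphism and $z_0\in\mathrm{Fix}(f)$. If $\Omega(f)=\{z_0\}$, then there exists $x\in\mathbb{R}^2$ with $\alpha(x)=\emptyset$ or $\omega(x)=\emptyset$.
   Context: A homeomorphism $f:\mathbb{R}^2\to\mathbb{R}^2$ is Topologically Anosov (TA) if: (i) there is a continuous strictly positive $\epsilon:\mathbb{R}^2\to\mathbb{R}$ such that for all $x\neq y$ there is $k\in\mathbb{Z}$ with $\|f^k(x)-f^k(y)\|>\epsilon(f^k(x))$; and (ii) for every continuous strictly positive $\epsilon$ there is a continuous strictly positive $\delta$ such that every $\delta$-pseudo-orbit is $\epsilon$-shadowed by an orbit. A $\delta$-pseudo-orbit is a sequence $(x_n)_{n\in\mathbb{Z}}$ with $\|f(x_n)-x_{n+1}\|<\delta(f(x_n))$; it is $\epsilon$-shadowed by the orbit of $x$ if $\|x_n-f^n(x)\|<\epsilon(x_n)$ for all $n$. $\Omega(f)$ is the nonwandering set; $\alpha(x),\omega(x)$ are the $\alpha$- and $\omega$-limit sets. *)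

theory Defs
  imports "HOL-Analysis.Analysis"
begin

type_synonym R2 = "real ^ 2"

definition plane_homeo :: "(R2 \<Rightarrow> R2) \<Rightarrow> bool" where
  "plane_homeo f \<longleftrightarrow> (\<exists>g. homeomorphism UNIV UNIV f g)"

definition iter :: "(R2 \<Rightarrow> R2) \<Rightarrow> int \<Rightarrow> R2 \<Rightarrow> R2" where
  "iter f k = (if 0 \<le> k then f ^^ nat k else inv f ^^ nat (- k))"

definition pos_cont_fun :: "(R2 \<Rightarrow> real) \<Rightarrow> bool" where
  "pos_cont_fun e \<longleftrightarrow> continuous_on UNIV e \<and> (\<forall>x. 0 < e x)"

definition pseudo_orbit :: "(R2 \<Rightarrow> R2) \<Rightarrow> (R2 \<Rightarrow> real) \<Rightarrow> (int \<Rightarrow> R2) \<Rightarrow> bool" where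
  "pseudo_orbit f \<delta> xs \<longleftrightarrow> (\<forall>n. norm (f (xs n) - xs (n + 1)) < \<delta> (f (xs n)))"

definition shadows :: "(R2 \<Rightarrow> R2) \<Rightarrow> (R2 \<Rightarrow> real) \<Rightarrow> R2 \<Rightarrow> (int \<Rightarrow> R2) \<Rightarrow> bool" where
  "shadows f \<epsilon> x xs \<longleftrightarrow> (\<forall>n. norm (xs n - iter f n x) < \<epsilon> (xs n))"

definition topologically_anosov :: "(R2 \<Rightarrow> R2) \<Rightarrow> bool" where
  "topologically_anosov f \<longleftrightarrow> plane_homeo f
     \<and> (\<exists>\<epsilon>. pos_cont_fun \<epsilon> \<and>
          (\<forall>x y. x \<noteq> y \<longrightarrow> (\<exists>k::int. norm (iter f k x - iter f k y) > \<epsilon> (iter f k x))))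
     \<and> (\<forall>\<epsilon>. pos_cont_fun \<epsilon> \<longrightarrow> (\<exists>\<delta>. pos_cont_fun \<delta> \<and>
          (\<forall>xs. pseudo_orbit f \<delta> xs \<longrightarrow> (\<exists>x. shadows f \<epsilon> x xs))))"

definition nonwandering :: "(R2 \<Rightarrow> R2) \<Rightarrow> R2 set" where
  "nonwandering f = {x. \<forall>U. open U \<and> x \<in> U \<longrightarrow> (\<exists>n::nat. n \<ge> 1 \<and> (f ^^ n) ` U \<inter> U \<noteq> {})}"

definition omega_limit :: "(R2 \<Rightarrow> R2) \<Rightarrow> R2 \<Rightarrow> R2 set" where
  "omega_limit f x = {y. \<exists>r. strict_mono r \<and> (\<lambda>k. iter f (int (r k)) x) \<longlonglongrightarrow> y}"

definition alpha_limit :: "(R2 \<Rightarrow> R2) \<Rightarrow> R2 \<Rightarrow> R2 set" where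
  "alpha_limit f x = {y. \<exists>r. strict_mono r \<and> (\<lambda>k. iter f (- int (r k)) x) \<longlonglongrightarrow> y}"

end

theory Submission
  imports Defs
begin

lemma iter_nat: "iter f (int n) = f ^^ n"
  by (simp add: iter_def)

lemma iter_zero: "iter f 0 = id"
  by (simp add: iter_def)

lemma iter_succ:
  assumes "bij f"
  shows "iter f (k + 1) x = f (iter f k x)"
proof (cases "0 \<le> k")
  case True
  then have "nat (k + 1) = Suc (nat k)" by simp
  then show ?thesis using True by (simp add: iter_def)
next
  case False
  then obtain n where n: "nat (- k) = Suc n" "nat (-(k+1)) = n"
    by (intro that[of "nat (-(k+1))"]) auto
  have "f (inv f ((inv f ^^ n) x)) = (inv f ^^ n) x"
    using assms by (simp add: bij_def surj_f_inv_f)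
  then show ?thesis using False n
    by (auto simp add: iter_def)
qed

lemma iter_pred:
  assumes "bij f"
  shows "iter f (k - 1) x = inv f (iter f k x)"
proof -
  have "iter f k x = f (iter f (k - 1) x)" using iter_succ[OF assms, of "k - 1" x] by simp
  then show ?thesis using assms by (simp add: bij_def inv_f_f)
qed

lemma iter_add:
  assumes "bij f"
  shows "iter f (i + j) x = iter f i (iter f j x)"
proof (induction i rule: int_induct[where k=0])
  case base
  then show ?case by (simp add: iter_zero)
next
  case (step1 i)
  have "iter f (i + 1 + j) x = iter f ((i + j) + 1) x" by (simp add: algebra_simps)
  also have "\<dots> = f (iter f (i + j) x)" by (rule iter_succ[OF assms])
  also have "\<dots> = f (iter f i (iter f j x))" using step1 by simp
  also have "\<dots> = iter f (i + 1) (iter f j x)" by (rule iter_succ[OF assms, symmetric])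
  finally show ?case .
next
  case (step2 i)
  have "iter f (i - 1 + j) x = iter f ((i + j) - 1) x" by (simp add: algebra_simps)
  also have "\<dots> = inv f (iter f (i + j) x)" by (rule iter_pred[OF assms])
  also have "\<dots> = inv f (iter f i (iter f j x))" using step2 by simp
  also have "\<dots> = iter f (i - 1) (iter f j x)" by (rule iter_pred[OF assms, symmetric])
  finally show ?case .
qed

lemma omega_nw:
  assumes "bij f" "w \<in> omega_limit f y"
  shows "w \<in> nonwandering f"
proof -
  obtain r where r: "strict_mono r" "(\<lambda>k. iter f (int (r k)) y) \<longlonglongrightarrow> w"
    using assms(2) by (auto simp: omega_limit_def)
  show ?thesis unfolding nonwandering_def
  proof (intro CollectI allI impI)
    fix U :: "R2 set" assume U: "open U \<and> w \<in> U"
    then have "eventually (\<lambda>k. iter f (int (r k)) y \<in> U) sequentially"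
      using r(2) topological_tendstoD by blast
    then obtain k0 where k0: "\<And>k. k \<ge> k0 \<Longrightarrow> iter f (int (r k)) y \<in> U"
      by (auto simp: eventually_sequentially)
    define n where "n = r (Suc k0) - r k0"
    have lt: "r k0 < r (Suc k0)" using r(1) by (simp add: strict_mono_def)
    then have n1: "n \<ge> 1" by (simp add: n_def)
    have "(f ^^ n) (iter f (int (r k0)) y) = iter f (int n) (iter f (int (r k0)) y)"
      by (simp add: iter_nat)
    also have "\<dots> = iter f (int n + int (r k0)) y" by (rule iter_add[OF assms(1), symmetric])
    also have "int n + int (r k0) = int (r (Suc k0))" using lt by (simp add: n_def)
    finally have "(f ^^ n) (iter f (int (r k0)) y) = iter f (int (r (Suc k0))) y" .
    then have "iter f (int (r (Suc k0))) y \<in> (f ^^ n) ` U \<inter> U"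
      using k0[of k0] k0[of "Suc k0"] by (metis IntI image_eqI le_Suc_eq order_refl)
    then show "\<exists>n\<ge>1. (f ^^ n) ` U \<inter> U \<noteq> {}" using n1 by blast
  qed
qed

lemma alpha_nw:
  assumes "bij f" "w \<in> alpha_limit f y"
  shows "w \<in> nonwandering f"
proof -
  obtain r where r: "strict_mono r" "(\<lambda>k. iter f (- int (r k)) y) \<longlonglongrightarrow> w"
    using assms(2) by (auto simp: alpha_limit_def)
  show ?thesis unfolding nonwandering_def
  proof (intro CollectI allI impI)
    fix U :: "R2 set" assume U: "open U \<and> w \<in> U"
    then have "eventually (\<lambda>k. iter f (- int (r k)) y \<in> U) sequentially"
      using r(2) topological_tendstoD by blast
    then obtain k0 where k0: "\<And>k. k \<ge> k0 \<Longrightarrow> iter f (- int (r k)) y \<in> U"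
      by (auto simp: eventually_sequentially)
    define n where "n = r (Suc k0) - r k0"
    have lt: "r k0 < r (Suc k0)" using r(1) by (simp add: strict_mono_def)
    then have n1: "n \<ge> 1" by (simp add: n_def)
    have "(f ^^ n) (iter f (- int (r (Suc k0))) y) = iter f (int n) (iter f (- int (r (Suc k0))) y)"
      by (simp add: iter_nat)
    also have "\<dots> = iter f (int n + - int (r (Suc k0))) y" by (rule iter_add[OF assms(1), symmetric])
    also have "int n + - int (r (Suc k0)) = - int (r k0)" using lt by (simp add: n_def)
    finally have "(f ^^ n) (iter f (- int (r (Suc k0))) y) = iter f (- int (r k0)) y" .
    then have "iter f (- int (r k0)) y \<in> (f ^^ n) ` U \<inter> U"
      using k0[of k0] k0[of "Suc k0"] by (metis IntI image_eqI le_Suc_eq order_refl)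
    then show "\<exists>n\<ge>1. (f ^^ n) ` U \<inter> U \<noteq> {}" using n1 by blast
  qed
qed

theorem mainTheorem13:
  fixes f :: "real ^ 2 \<Rightarrow> real ^ 2" and z0 :: "real ^ 2"
  assumes "topologically_anosov f"
    and "f z0 = z0"
    and "nonwandering f = {z0}"
  shows "\<exists>x. alpha_limit f x = {} \<or> omega_limit f x = {}"
proof (rule ccontr)
  assume H: "\<not> ?thesis"
  then have ne: "\<And>x. alpha_limit f x \<noteq> {} \<and> omega_limit f x \<noteq> {}" by auto
  from assms(1) obtain g where hom: "homeomorphism UNIV UNIV f g"
    by (auto simp: topologically_anosov_def plane_homeo_def)
  then have "g \<circ> f = id" "f \<circ> g = id" by (auto simp: homeomorphism_def fun_eq_iff)
  then have bij: "bij f" using o_bij by blast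
  have om: "\<And>y w. w \<in> omega_limit f y \<Longrightarrow> w = z0"
    using omega_nw[OF bij] assms(3) by blast
  have al: "\<And>y w. w \<in> alpha_limit f y \<Longrightarrow> w = z0"
    using alpha_nw[OF bij] assms(3) by blast
  obtain x :: "real^2" where xz: "x \<noteq> z0"
  proof (cases "z0 = 0")
    case True
    have "axis 1 (1::real) \<noteq> (0::real^2)" by (simp add: axis_eq_0_iff)
    then show ?thesis using True that by blast
  next
    case False
    then show ?thesis using that[of 0] by metis
  qed
  define d where "d = norm (x - z0)"
  have d0: "d > 0" using xz by (simp add: d_def)
  have pe: "pos_cont_fun (\<lambda>_. d/2)" using d0 by (simp add: pos_cont_fun_def)
  from assms(1) pe obtain \<delta> where \<delta>: "pos_cont_fun \<delta>"
    and shad: "\<And>xs. pseudo_orbit f \<delta> xs \<Longrightarrow> \<exists>y. shadows f (\<lambda>_. d/2) y xs"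
    unfolding topologically_anosov_def by blast
  have \<delta>0: "\<delta> z0 > 0" and \<delta>c: "continuous_on UNIV \<delta>" using \<delta> by (auto simp: pos_cont_fun_def)
  then obtain \<rho> where \<rho>: "\<rho> > 0" "\<And>z. dist z z0 < \<rho> \<Longrightarrow> dist (\<delta> z) (\<delta> z0) < \<delta> z0 / 2"
    unfolding continuous_on_iff by (metis UNIV_I half_gt_zero)
  define \<eta> where "\<eta> = min \<rho> (\<delta> z0 / 4)"
  have \<eta>0: "\<eta> > 0" using \<rho> \<delta>0 by (simp add: \<eta>_def)
  obtain v where "v \<in> alpha_limit f x" using ne by blast
  then have "z0 \<in> alpha_limit f x" using al by metis
  then obtain r where r: "strict_mono r" "(\<lambda>k. iter f (- int (r k)) x) \<longlonglongrightarrow> z0"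
    by (auto simp: alpha_limit_def)
  then obtain no where "\<And>k. k \<ge> no \<Longrightarrow> norm (iter f (- int (r k)) x - z0) < \<eta>"
    using \<eta>0 by (metis LIMSEQ_iff)
  then obtain m where m: "norm (iter f (- int m) x - z0) < \<eta>" by blast
  obtain v where "v \<in> omega_limit f x" using ne by blast
  then have "z0 \<in> omega_limit f x" using om by metis
  then obtain r' where r': "strict_mono r'" "(\<lambda>k. iter f (int (r' k)) x) \<longlonglongrightarrow> z0"
    by (auto simp: omega_limit_def)
  then obtain no' where no': "\<And>k. k \<ge> no' \<Longrightarrow> norm (iter f (int (r' k)) x - z0) < \<eta>"
    using \<eta>0 by (metis LIMSEQ_iff)
  define n where "n = r' (max no' 1)"
  have n: "norm (iter f (int n) x - z0) < \<eta>" using no' by (simp add: n_def)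
  have n1: "n \<ge> 1" unfolding n_def using seq_suble[OF r'(1), of "max no' 1"] by simp
  define P where "P = m + n"
  have P1: "P \<ge> 1" "m < P" using n1 by (auto simp: P_def)
  define a where "a = iter f (- int m) x"
  define xs where "xs = (\<lambda>k::int. iter f (k mod int P) a)"
  have po: "pseudo_orbit f \<delta> xs"
    unfolding pseudo_orbit_def
  proof
    fix k :: int
    define j where "j = k mod int P"
    have j: "0 \<le> j" "j < int P" using P1 by (auto simp: j_def)
    have fx: "f (xs k) = iter f (j + 1) a" by (simp add: xs_def j_def iter_succ[OF bij])
    have k1: "(k + 1) mod int P = (j + 1) mod int P" by (simp add: j_def mod_add_left_eq)
    show "norm (f (xs k) - xs (k + 1)) < \<delta> (f (xs k))"
    proof (cases "j + 1 < int P")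
      case True
      then have "xs (k + 1) = f (xs k)" using j fx k1 by (simp add: xs_def)
      then show ?thesis using \<delta> by (simp add: pos_cont_fun_def)
    next
      case False
      then have jp: "j + 1 = int P" using j by simp
      then have "xs (k + 1) = a" using k1 by (simp add: xs_def iter_zero)
      moreover have "f (xs k) = iter f (int n) x"
        using fx jp by (simp add: a_def P_def iter_add[OF bij, symmetric])
      ultimately have e: "norm (f (xs k) - xs (k + 1)) = norm (iter f (int n) x - a)" by simp
      have "norm (iter f (int n) x - a) \<le> norm (iter f (int n) x - z0) + norm (a - z0)"
      proof -
        have eq: "iter f (int n) x - a = (iter f (int n) x - z0) + (z0 - a)" by simp
        have "norm (iter f (int n) x - a) \<le> norm (iter f (int n) x - z0) + norm (z0 - a)"
          unfolding eq by (rule norm_triangle_ineq)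
        then show ?thesis by (simp add: norm_minus_commute)
      qed
      also have "\<dots> < 2 * \<eta>" using n m by (simp add: a_def)
      also have "\<dots> \<le> \<delta> z0 / 2" by (simp add: \<eta>_def)
      also have "\<delta> z0 / 2 < \<delta> (iter f (int n) x)"
      proof -
        have "dist (iter f (int n) x) z0 < \<rho>" using n by (simp add: \<eta>_def dist_norm)
        then have "dist (\<delta> (iter f (int n) x)) (\<delta> z0) < \<delta> z0 / 2" by (rule \<rho>(2))
        then show ?thesis unfolding dist_real_def by arith
      qed
      finally show ?thesis using e \<open>f (xs k) = iter f (int n) x\<close> by simp
    qed
  qed
  obtain y where y: "\<And>k. norm (xs k - iter f k y) < d/2"
    using shad[OF po] by (auto simp: shadows_def)
  define s where "s = (\<lambda>j::nat. iter f (int (j * P + m)) y)"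
  have sx: "s j \<in> cball x (d/2)" for j
  proof -
    have "int (j * P + m) mod int P = int m" using P1
      by (metis mod_mult_self3 of_nat_add of_nat_mult mod_pos_pos_trivial of_nat_0_le_iff of_nat_less_iff)
    then have "xs (int (j * P + m)) = x"
      by (simp add: xs_def a_def iter_add[OF bij, symmetric] iter_zero)
    then show ?thesis using y[of "int (j * P + m)"] by (simp add: s_def dist_norm)
  qed
  obtain w r2 where w: "w \<in> cball x (d/2)" "strict_mono r2" "(s \<circ> r2) \<longlonglongrightarrow> w"
  proof -
    have "compact (cball x (d/2))" by simp
    then obtain w r2 where "w \<in> cball x (d/2)" "strict_mono r2" "(s \<circ> r2) \<longlonglongrightarrow> w"
      using sx unfolding compact_def by blast
    then show ?thesis using that by blast
  qed
  have sm: "strict_mono (\<lambda>k. r2 k * P + m)"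
    using w(2) P1 by (simp add: strict_mono_def)
  have "w \<in> omega_limit f y"
    unfolding omega_limit_def using sm w(3) by (auto simp: s_def o_def)
  then have "w = z0" by (rule om)
  then show False using w(1) d0 by (simp add: d_def dist_norm norm_minus_commute)
qed

end
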